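(* Let $\Xi:\mathbf R^n\to\mathbf R^n$ be continuously differentiable with symmetric Jacobian $D\Xi(x)$ for every $x\in\mathbf R^n$, and let $\alpha\in(0,1)$. Then $\Xi$ is $\alpha$-averaged if and only if $\operatorname{spec}(D\Xi(x))\subset[1-2\alpha,1]$ for all $x\in\mathbf R^n$.
   Context: $\mathbf R^n$ carries the Euclidean norm $\|\cdot\|$. An operator $T$ is non-expansive if $\|T(x)-T(y)\|\le\|x-y\|$ for all $x,y$. For $\alpha\in(0,1)$, an operator $\Xi:\mathbf R^n\to\mathbf R^n$ is called $\alpha$-averaged if there exists a non-expansive $T:\mathbf R^n\to\mathbf R^n$ such that $\Xi=(1-\alpha)\mathrm{id}+\alpha T$. $\operatorname{spec}(M)$ denotes the set of eigenvalues of a matrix $M$. *)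

theory Defs
  imports "HOL-Analysis.Analysis"
begin

definition nonexpansive :: "('a::real_normed_vector \<Rightarrow> 'a) \<Rightarrow> bool" where
  "nonexpansive T \<longleftrightarrow> (\<forall>x y. norm (T x - T y) \<le> norm (x - y))"

definition averaged :: "real \<Rightarrow> ('a::real_normed_vector \<Rightarrow> 'a) \<Rightarrow> bool" where
  "averaged \<alpha> \<Xi> \<longleftrightarrow> (\<exists>T. nonexpansive T \<and> \<Xi> = (\<lambda>x. (1 - \<alpha>) *\<^sub>R x + \<alpha> *\<^sub>R T x))"

definition spec :: "real^'n^'n \<Rightarrow> complex set" where
  "spec M = {c. \<exists>v::complex^'n. v \<noteq> 0 \<and>
      (\<chi> i j. complex_of_real (M $ i $ j)) *v v = c *s v}"

end

theory Submission
  imports Defs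
begin

lemma symm_inner:
  fixes M :: "real^'n^'n"
  assumes "transpose M = M"
  shows "(M *v u) \<bullet> w = u \<bullet> (M *v w)"
proof -
  have s: "M $ i $ j = M $ j $ i" for i j
    using arg_cong[OF assms, of "\<lambda>A. A $ i $ j"] by (simp add: transpose_def)
  have "(M *v u) \<bullet> w = (\<Sum>i\<in>UNIV. \<Sum>j\<in>UNIV. M $ i $ j * u $ j * w $ i)"
    by (simp add: inner_vec_def matrix_vector_mult_def sum_distrib_right)
  also have "\<dots> = (\<Sum>j\<in>UNIV. \<Sum>i\<in>UNIV. M $ i $ j * u $ j * w $ i)"
    by (rule sum.swap)
  also have "\<dots> = u \<bullet> (M *v w)"
    by (simp add: inner_vec_def matrix_vector_mult_def sum_distrib_left s mult_ac)
  finally show ?thesis .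
qed

lemma quad_zero:
  fixes a b :: real
  assumes "\<And>t. 2 * t * a + t^2 * b \<le> 0"
  shows "a = 0"
proof (rule ccontr)
  assume "a \<noteq> 0"
  define K where "K = \<bar>b\<bar> + 1"
  have K: "K > 0" "\<bar>b\<bar> \<le> K - 1" by (auto simp: K_def)
  have "2 * (a/K) * a + (a/K)^2 * b \<le> 0" by (rule assms)
  hence "2 * a^2 * K + a^2 * b \<le> 0" using K
    by (simp add: field_simps power2_eq_square)
  moreover have "\<bar>a^2*b\<bar> = a^2*\<bar>b\<bar>" by (simp add: abs_mult)
  moreover have "a^2*\<bar>b\<bar> = a^2*K - a^2" by (simp add: K_def algebra_simps)
  moreover have "a^2 > 0" using \<open>a \<noteq> 0\<close> by simp
  moreover have "a^2 * K > 0" using K \<open>a \<noteq> 0\<close> by simp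
  ultimately show False by linarith
qed


lemma selfadj_bound:
  fixes f :: "'a::euclidean_space \<Rightarrow> 'a"
  assumes lin: "linear f"
    and sa: "\<And>u w. f u \<bullet> w = u \<bullet> f w"
    and ev: "\<And>u \<mu>. u \<noteq> 0 \<Longrightarrow> f u = \<mu> *\<^sub>R u \<Longrightarrow> \<bar>\<mu>\<bar> \<le> a"
  shows "norm (f u) \<le> a * norm u"
proof -
  have cont: "continuous_on (sphere 0 1) (\<lambda>u. norm (f u)^2)"
    using lin by (intro continuous_intros linear_continuous_on linear_conv_bounded_linear[THEN iffD1])
  have ne: "sphere (0::'a) 1 \<noteq> {}" by simp
  obtain v where v: "v \<in> sphere 0 1" and vmax: "\<And>y. y \<in> sphere 0 1 \<Longrightarrow> norm (f y)^2 \<le> norm (f v)^2"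
    using continuous_attains_sup[OF compact_sphere ne cont] by blast
  define l where "l = norm (f v)^2"
  have nv: "norm v = 1" using v by simp
  have bnd: "norm (f y)^2 \<le> l * norm y ^2" for y
  proof (cases "y = 0")
    case True then show ?thesis using lin by (simp add: linear_0)
  next
    case False
    have "(1 / norm y) *\<^sub>R y \<in> sphere 0 1" using False by simp
    hence "norm (f ((1 / norm y) *\<^sub>R y))^2 \<le> l" using vmax l_def by blast
    hence "(norm (f y) / norm y)^2 \<le> l" using lin by (simp add: linear_scale)
    thus ?thesis using False by (simp add: power_divide field_simps)
  qed
  have key: "f v \<bullet> f w = l * (v \<bullet> w)" for w
  proof -
    have "2 * t * (f v \<bullet> f w - l * (v \<bullet> w)) + t^2 * (norm (f w)^2 - l * norm w ^2) \<le> 0" for t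
    proof -
      have "norm (f (v + t *\<^sub>R w))^2 \<le> l * norm (v + t *\<^sub>R w)^2" by (rule bnd)
      moreover have "f (v + t *\<^sub>R w) = f v + t *\<^sub>R f w" using lin by (simp add: linear_add linear_scale)
      ultimately have "norm (f v + t *\<^sub>R f w)^2 \<le> l * norm (v + t *\<^sub>R w)^2" by simp
      moreover have "norm (f v + t *\<^sub>R f w)^2 = l + 2 * t * (f v \<bullet> f w) + t^2 * norm (f w)^2"
        unfolding l_def power2_norm_eq_inner by (simp add: inner_add_left inner_add_right algebra_simps inner_commute power2_eq_square)
      moreover have "norm (v + t *\<^sub>R w)^2 = 1 + 2 * t * (v \<bullet> w) + t^2 * norm w^2"
      proof -
        have "v \<bullet> v = 1" using nv by (simp add: dot_square_norm)
        thus ?thesis unfolding power2_norm_eq_inner by (simp add: inner_add_left inner_add_right algebra_simps inner_commute power2_eq_square)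
      qed
      ultimately show ?thesis by (simp add: algebra_simps)
    qed
    from quad_zero[OF this] show ?thesis by simp
  qed
  have ffv: "f (f v) = l *\<^sub>R v"
  proof -
    define w where "w = f (f v) - l *\<^sub>R v"
    have "f (f v) \<bullet> w = l * (v \<bullet> w)" using key[of w] sa[of "f v" w] by (simp add: inner_commute)
    hence "w \<bullet> w = 0" by (simp add: w_def inner_diff_left)
    thus ?thesis by (simp add: w_def)
  qed
  define m where "m = sqrt l"
  have l0: "l \<ge> 0" by (simp add: l_def)
  have ml: "m * m = l" using l0 by (simp add: m_def flip: power2_eq_square)
  have m0: "m \<ge> 0" using l0 by (simp add: m_def)
  have "m \<le> a"
  proof (cases "f v + m *\<^sub>R v = 0")
    case True
    hence "f v = (- m) *\<^sub>R v" by (simp add: eq_neg_iff_add_eq_0)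
    moreover have "v \<noteq> 0" using nv by auto
    ultimately show ?thesis using ev m0 by fastforce
  next
    case False
    have "f (f v + m *\<^sub>R v) = m *\<^sub>R (f v + m *\<^sub>R v)"
      using lin ffv ml by (simp add: linear_add linear_scale algebra_simps)
    then show ?thesis using ev[OF False] m0 by fastforce
  qed
  hence "l \<le> a * a" using ml m0 mult_mono[of m a m a] by simp
  hence "norm (f u)^2 \<le> (a * norm u)^2"
    using bnd[of u] by (smt (verit) mult_right_mono power_mult_distrib power2_eq_square zero_le_power2)
  moreover have "a \<ge> 0" using \<open>m \<le> a\<close> m0 by simp
  ultimately show ?thesis by (simp add: power2_le_iff_abs_le)
qed


lemma real_eig_spec:
  fixes A :: "real^'n^'n"
  assumes "u \<noteq> 0" "A *v u = r *\<^sub>R u"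
  shows "complex_of_real r \<in> spec A"
proof -
  define v :: "complex^'n" where "v = (\<chi> i. complex_of_real (u $ i))"
  have "v \<noteq> 0" using assms(1) by (auto simp: v_def vec_eq_iff)
  moreover have "(\<chi> i j. complex_of_real (A $ i $ j)) *v v = complex_of_real r *s v"
  proof -
    have "(\<Sum>j\<in>UNIV. A $ i $ j * u $ j) = r * u $ i" for i
      using arg_cong[OF assms(2), of "\<lambda>x. x $ i"] by (simp add: matrix_vector_mult_def)
    hence "(\<Sum>j\<in>UNIV. complex_of_real (A $ i $ j) * complex_of_real (u $ j)) = complex_of_real r * complex_of_real (u $ i)" for i
      by (metis (no_types, lifting) of_real_mult of_real_sum sum.cong)
    thus ?thesis by (simp add: vec_eq_iff matrix_vector_mult_def v_def)
  qed
  ultimately show ?thesis unfolding spec_def by blast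
qed

lemma spec_real_eig:
  fixes A :: "real^'n^'n"
  assumes sym: "transpose A = A" and c: "c \<in> spec A"
  shows "\<exists>u r. u \<noteq> 0 \<and> A *v u = r *\<^sub>R u \<and> c = complex_of_real r"
proof -
  obtain v :: "complex^'n" where v0: "v \<noteq> 0" and ev: "(\<chi> i j. complex_of_real (A $ i $ j)) *v v = c *s v"
    using c unfolding spec_def by blast
  have comp: "(\<Sum>j\<in>UNIV. complex_of_real (A $ i $ j) * v $ j) = c * v $ i" for i
    using arg_cong[OF ev, of "\<lambda>x. x $ i"] by (simp add: matrix_vector_mult_def)
  define x where "x = (\<chi> i. Re (v $ i))"
  define y where "y = (\<chi> i. Im (v $ i))"
  have Ax: "A *v x = Re c *\<^sub>R x - Im c *\<^sub>R y"
  proof -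
    have "(\<Sum>j\<in>UNIV. A $ i $ j * Re (v $ j)) = Re c * Re (v $ i) - Im c * Im (v $ i)" for i
      using arg_cong[OF comp[of i], of Re] by (simp add: Re_sum)
    thus ?thesis by (simp add: vec_eq_iff matrix_vector_mult_def x_def y_def)
  qed
  have Ay: "A *v y = Re c *\<^sub>R y + Im c *\<^sub>R x"
  proof -
    have "(\<Sum>j\<in>UNIV. A $ i $ j * Im (v $ j)) = Re c * Im (v $ i) + Im c * Re (v $ i)" for i
      using arg_cong[OF comp[of i], of Im] by (simp add: Im_sum)
    thus ?thesis by (simp add: vec_eq_iff matrix_vector_mult_def x_def y_def)
  qed
  have "(A *v x) \<bullet> y = x \<bullet> (A *v y)" by (rule symm_inner[OF sym])
  hence "Im c * (x \<bullet> x + y \<bullet> y) = 0"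
    unfolding Ax Ay by (simp add: inner_diff_left inner_add_right algebra_simps inner_commute)
  moreover have "x \<noteq> 0 \<or> y \<noteq> 0"
  proof (rule ccontr)
    assume "\<not> (x \<noteq> 0 \<or> y \<noteq> 0)"
    hence "x $ i = 0" "y $ i = 0" for i by auto
    hence "v $ i = 0" for i
      by (simp add: x_def y_def complex_eq_iff)
    with v0 show False by (simp add: vec_eq_iff)
  qed
  ultimately have "x \<bullet> x + y \<bullet> y > 0 \<and> Im c = 0"
    by (metis add_nonneg_pos add_pos_nonneg inner_gt_zero_iff inner_ge_zero mult_eq_0_iff order_less_irrefl)
  hence im: "Im c = 0" by simp
  hence cr: "c = complex_of_real (Re c)" by (simp add: complex_eq_iff)
  show ?thesis
  proof (cases "x = 0")
    case False thus ?thesis using Ax im cr by auto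
  next
    case True
    hence "y \<noteq> 0" using \<open>x \<noteq> 0 \<or> y \<noteq> 0\<close> by simp
    thus ?thesis using Ay im cr by auto
  qed
qed


lemma deriv_nonexp:
  fixes f :: "'a::real_normed_vector \<Rightarrow> 'b::real_normed_vector"
  assumes d: "(f has_derivative f') (at x)" and ne: "\<And>y. norm (f y - f x) \<le> norm (y - x)"
  shows "norm (f' u) \<le> norm u"
proof (cases "u = 0")
  case True
  have "linear f'" using d has_derivative_linear by blast
  thus ?thesis using True by (simp add: linear_0)
next
  case False
  have bl: "bounded_linear f'" using d has_derivative_bounded_linear by blast
  show ?thesis
  proof (rule field_le_epsilon)
    fix e :: real assume e: "0 < e"
    have nu: "norm u > 0" using False by simp
    obtain dd where dd: "dd > 0" and H: "\<And>y. norm (y - x) < dd \<Longrightarrow> norm (f y - f x - f' (y - x)) \<le> (e / norm u) * norm (y - x)"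
      using d e nu unfolding has_derivative_at_alt by (meson divide_pos_pos)
    define t where "t = dd / (2 * norm u)"
    have t: "t > 0" using dd nu by (simp add: t_def)
    have nt: "norm ((x + t *\<^sub>R u) - x) = t * norm u" using t by simp
    have "t * norm u < dd" using dd nu by (simp add: t_def)
    hence H1: "norm (f (x + t *\<^sub>R u) - f x - t *\<^sub>R f' u) \<le> (e / norm u) * (t * norm u)"
      using H[of "x + t *\<^sub>R u"] nt linear_scale[OF bounded_linear.linear[OF bl]] False t by simp
    have H2: "norm (f (x + t *\<^sub>R u) - f x) \<le> t * norm u" using ne[of "x + t *\<^sub>R u"] nt t by simp
    have "norm (t *\<^sub>R f' u) \<le> norm (f (x + t *\<^sub>R u) - f x) + norm (f (x + t *\<^sub>R u) - f x - t *\<^sub>R f' u)"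
      using norm_triangle_ineq4[of "f (x + t *\<^sub>R u) - f x" "f (x + t *\<^sub>R u) - f x - t *\<^sub>R f' u"] by simp
    also have "\<dots> \<le> t * norm u + t * e" using H1 H2 nu by (simp add: mult.commute)
    finally have "t * norm (f' u) \<le> t * (norm u + e)" using t by (simp add: algebra_simps)
    thus "norm (f' u) \<le> norm u + e" using t by simp
  qed
qed


theorem mainTheorem2:
  fixes \<Xi> :: "real^'n \<Rightarrow> real^'n"
    and \<Xi>' :: "real^'n \<Rightarrow> real^'n \<Rightarrow> real^'n"
    and \<alpha> :: real
  assumes deriv: "\<And>x. (\<Xi> has_derivative \<Xi>' x) (at x)"
    and cont: "continuous_on UNIV (\<lambda>x. matrix (\<Xi>' x))"
    and symm: "\<And>x. transpose (matrix (\<Xi>' x)) = matrix (\<Xi>' x)"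
    and alpha: "0 < \<alpha>" "\<alpha> < 1"
  shows "averaged \<alpha> \<Xi> \<longleftrightarrow>
         (\<forall>x. spec (matrix (\<Xi>' x)) \<subseteq> complex_of_real ` {1 - 2 * \<alpha> .. 1})"
proof -
  have lin: "linear (\<Xi>' x)" for x using deriv has_derivative_linear by blast
  have mw: "matrix (\<Xi>' x) *v u = \<Xi>' x u" for x u using lin matrix_works linear_matrix_vector_mul_eq by metis
  define T where "T = (\<lambda>y. (1/\<alpha>) *\<^sub>R (\<Xi> y - (1-\<alpha>) *\<^sub>R y))"
  define T' where "T' = (\<lambda>x u. (1/\<alpha>) *\<^sub>R (\<Xi>' x u - (1-\<alpha>) *\<^sub>R u))"
  have dT: "(T has_derivative T' x) (at x)" for x
    unfolding T_def T'_def by (intro derivative_intros deriv)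
  have nT: "norm (T' x u) = norm (\<Xi>' x u - (1-\<alpha>) *\<^sub>R u) / \<alpha>" for x u
    using alpha by (simp add: T'_def)
  have avg: "averaged \<alpha> \<Xi> \<longleftrightarrow> nonexpansive T"
  proof
    assume "averaged \<alpha> \<Xi>"
    then obtain T0 where T0: "nonexpansive T0" "\<Xi> = (\<lambda>x. (1 - \<alpha>) *\<^sub>R x + \<alpha> *\<^sub>R T0 x)"
      unfolding averaged_def by blast
    have "T = T0" using alpha by (auto simp: T_def T0(2) fun_eq_iff)
    thus "nonexpansive T" using T0 by simp
  next
    assume "nonexpansive T"
    moreover have "\<Xi> = (\<lambda>x. (1 - \<alpha>) *\<^sub>R x + \<alpha> *\<^sub>R T x)"
      using alpha by (auto simp: T_def fun_eq_iff)
    ultimately show "averaged \<alpha> \<Xi>" unfolding averaged_def by blast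
  qed
  have ne: "nonexpansive T \<longleftrightarrow> (\<forall>x u. norm (\<Xi>' x u - (1-\<alpha>) *\<^sub>R u) \<le> \<alpha> * norm u)"
  proof
    assume "nonexpansive T"
    hence "norm (T' x u) \<le> norm u" for x u
      using deriv_nonexp[OF dT] unfolding nonexpansive_def by blast
    thus "\<forall>x u. norm (\<Xi>' x u - (1-\<alpha>) *\<^sub>R u) \<le> \<alpha> * norm u"
      using alpha by (simp add: nT divide_le_eq mult.commute)
  next
    assume H: "\<forall>x u. norm (\<Xi>' x u - (1-\<alpha>) *\<^sub>R u) \<le> \<alpha> * norm u"
    have "onorm (T' x) \<le> 1" for x
    proof (rule onorm_le)
      fix u show "norm (T' x u) \<le> 1 * norm u"
        using H alpha by (simp add: nT divide_le_eq mult.commute)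
    qed
    hence "norm (T x - T y) \<le> 1 * norm (x - y)" for x y
      by (intro differentiable_bound[of UNIV T T' 1]) (auto simp: dT)
    thus "nonexpansive T" unfolding nonexpansive_def by simp
  qed
  have pt: "(\<forall>u. norm (\<Xi>' x u - (1-\<alpha>) *\<^sub>R u) \<le> \<alpha> * norm u) \<longleftrightarrow>
      spec (matrix (\<Xi>' x)) \<subseteq> complex_of_real ` {1 - 2 * \<alpha> .. 1}" for x
  proof
    assume H: "\<forall>u. norm (\<Xi>' x u - (1-\<alpha>) *\<^sub>R u) \<le> \<alpha> * norm u"
    show "spec (matrix (\<Xi>' x)) \<subseteq> complex_of_real ` {1 - 2 * \<alpha> .. 1}"
    proof
      fix c assume "c \<in> spec (matrix (\<Xi>' x))"
      then obtain u r where u: "u \<noteq> 0" "\<Xi>' x u = r *\<^sub>R u" "c = complex_of_real r"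
        using spec_real_eig[OF symm] mw by metis
      have "norm ((r - (1-\<alpha>)) *\<^sub>R u) \<le> \<alpha> * norm u"
      proof -
        have "(r - (1-\<alpha>)) *\<^sub>R u = \<Xi>' x u - (1-\<alpha>) *\<^sub>R u" using u(2) by (simp add: algebra_simps)
        thus ?thesis using H by metis
      qed
      hence "\<bar>r - (1-\<alpha>)\<bar> * norm u \<le> \<alpha> * norm u" by simp
      hence "\<bar>r - (1-\<alpha>)\<bar> \<le> \<alpha>" using u(1) by simp
      hence "r \<in> {1 - 2 * \<alpha> .. 1}" by auto
      thus "c \<in> complex_of_real ` {1 - 2 * \<alpha> .. 1}" using u(3) by blast
    qed
  next
    assume S: "spec (matrix (\<Xi>' x)) \<subseteq> complex_of_real ` {1 - 2 * \<alpha> .. 1}"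
    define f where "f = (\<lambda>u. \<Xi>' x u - (1-\<alpha>) *\<^sub>R u)"
    have lf: "linear f" unfolding f_def
      by (rule linearI) (simp_all add: linear_add[OF lin] linear_scale[OF lin] algebra_simps)
    have sa: "f u \<bullet> w = u \<bullet> f w" for u w
      using symm_inner[OF symm[of x], of u w]
      by (simp add: f_def mw inner_diff_left inner_diff_right)
    have ev: "\<bar>\<mu>\<bar> \<le> \<alpha>" if "u \<noteq> 0" "f u = \<mu> *\<^sub>R u" for u \<mu>
    proof -
      have "matrix (\<Xi>' x) *v u = (\<mu> + (1-\<alpha>)) *\<^sub>R u"
        using that(2) by (simp add: f_def mw algebra_simps eq_diff_eq)
      from real_eig_spec[OF that(1) this] S
      obtain r where "r \<in> {1 - 2 * \<alpha> .. 1}" "complex_of_real (\<mu> + (1-\<alpha>)) = complex_of_real r" by blast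
      hence "\<mu> + (1-\<alpha>) \<in> {1 - 2 * \<alpha> .. 1}" using of_real_eq_iff by metis
      thus ?thesis by auto
    qed
    show "\<forall>u. norm (\<Xi>' x u - (1-\<alpha>) *\<^sub>R u) \<le> \<alpha> * norm u"
      using selfadj_bound[OF lf sa ev] by (simp add: f_def)
  qed
  show ?thesis using avg ne pt by blast
qed

end
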